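(* A random permutation $\Pi$ with values in $S_n$ is bi-decomposable if and only if for all pairs of consecutive partitions $\underline{\kappa}=(\underline{\kappa}_1,\ldots,\underline{\kappa}_s)$ and $\underline{\lambda}=(\underline{\lambda}_1,\ldots,\underline{\lambda}_t)$ of $\{1,\ldots,n\}$, the random variables $\Pi_{\underline{\kappa}_i\times\underline{\lambda}_j}$, $1\le i\le s$, $1\le j\le t$, are conditionally independent given the pair $(\{\Pi_{\underline{\kappa}}\},\{\Pi^{-1}_{\underline{\lambda}}\})$.
   Context: $S_n$ is the group of permutations of $\{1,\ldots,n\}$; $\Pi$ is a random element of $S_n$. For a vector $v$, $v\{i:j\}=\{v(i),\ldots,v(j)\}$ and $v(i:j)=(v(i),\ldots,v(j))$. $\Pi$ is called $L$-decomposable if for every $2\le k\le n-2$ and $\pi\in S_n$, $P(\Pi(k+1)=\pi(k+1)\mid \Pi(1:k)=\pi(1:k)) = P(\Pi(k+1)=\pi(k+1)\mid \Pi\{1:k\}=\pi\{1:k\})$ whenever the left side is defined. $\Pi$ is bi-decomposable if both $\Pi$ and $\Pi^{-1}$ are $L$-decomposable. A consecutive partition is given by $0=\kappa_0<\kappa_1<\cdots<\kappa_{s}=n$ with blocks $\underline{\kappa}_i=\{\kappa_{i-1}+1,\ldots,\kappa_i\}$; for $\pi\in S_n$, $\{\pi_{\underline{\kappa}}\}=(\pi\{\kappa_{i-1}+1:\kappa_i\})_{i=1}^{s}$ is the vector of unordered marginals (and similarly $\{\pi^{-1}_{\underline{\lambda}}\}$ for $\pi^{-1}$). For $\pi\in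 S_n$, $\pi_{\underline{\kappa}_i\times\underline{\lambda}_j}=\{(a,\pi(a)): a\in\underline{\kappa}_i,\ \pi(a)\in\underline{\lambda}_j\}$. *)

theory Defs
  imports "HOL-Probability.Probability" "HOL-Combinatorics.Permutations"
begin

text \<open>A random permutation of {1..n} is modelled as a pmf on functions nat => nat
  whose support consists of permutations of {1..n} (identity outside {1..n}).\<close>

definition cprob :: "'a pmf \<Rightarrow> 'a set \<Rightarrow> 'a set \<Rightarrow> real" where
  "cprob p A B = measure_pmf.prob p (A \<inter> B) / measure_pmf.prob p B"

definition L_decomposable :: "nat \<Rightarrow> (nat \<Rightarrow> nat) pmf \<Rightarrow> bool" where
  "L_decomposable n p \<longleftrightarrow>
     (\<forall>k \<pi>. 2 \<le> k \<and> k + 2 \<le> n \<and> \<pi> permutes {1..n} \<and>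
        measure_pmf.prob p {\<sigma>. \<forall>i\<in>{1..k}. \<sigma> i = \<pi> i} > 0 \<longrightarrow>
        cprob p {\<sigma>. \<sigma> (k+1) = \<pi> (k+1)} {\<sigma>. \<forall>i\<in>{1..k}. \<sigma> i = \<pi> i}
        = cprob p {\<sigma>. \<sigma> (k+1) = \<pi> (k+1)} {\<sigma>. \<sigma> ` {1..k} = \<pi> ` {1..k}})"

definition bi_decomposable :: "nat \<Rightarrow> (nat \<Rightarrow> nat) pmf \<Rightarrow> bool" where
  "bi_decomposable n p \<longleftrightarrow> L_decomposable n p \<and> L_decomposable n (map_pmf inv p)"

definition consecutive_partition :: "nat \<Rightarrow> nat \<Rightarrow> (nat \<Rightarrow> nat) \<Rightarrow> bool" where
  "consecutive_partition n s kappa \<longleftrightarrow>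
     kappa 0 = 0 \<and> kappa s = n \<and> (\<forall>i<s. kappa i < kappa (Suc i))"

definition block :: "(nat \<Rightarrow> nat) \<Rightarrow> nat \<Rightarrow> nat set" where
  "block kappa i = {kappa (i - 1) + 1 .. kappa i}"

definition graph_block :: "(nat \<Rightarrow> nat) \<Rightarrow> nat set \<Rightarrow> nat set \<Rightarrow> (nat \<times> nat) set" where
  "graph_block \<pi> K L = {(a, \<pi> a) | a. a \<in> K \<and> \<pi> a \<in> L}"

definition cond_indep_vars ::
  "'a pmf \<Rightarrow> ('i \<Rightarrow> 'a \<Rightarrow> 'b) \<Rightarrow> 'i set \<Rightarrow> ('a \<Rightarrow> 'c) \<Rightarrow> bool" where
  "cond_indep_vars p X I Y \<longleftrightarrow>
     (\<forall>y. measure_pmf.prob p {\<omega>. Y \<omega> = y} > 0 \<longrightarrow>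
        prob_space.indep_vars (measure_pmf (cond_pmf p {\<omega>. Y \<omega> = y}))
          (\<lambda>_. count_space UNIV) X I)"

end

theory Submission
  imports Defs
begin

lemma cp_mono:
  assumes "consecutive_partition n s kappa" "i < j" "j \<le> s"
  shows "kappa i < kappa j"
  using assms(2,3)
proof (induction j)
  case 0 then show ?case by simp
next
  case (Suc j)
  have "kappa j < kappa (Suc j)" using assms(1) Suc.prems unfolding consecutive_partition_def by auto
  then show ?case using Suc by (cases "i = j") auto
qed

lemma cp_mono_le:
  assumes "consecutive_partition n s kappa" "i \<le> j" "j \<le> s"
  shows "kappa i \<le> kappa j"
  using cp_mono[OF assms(1), of i j] assms by (cases "i = j") auto

lemma block_sub:
  assumes "consecutive_partition n s kappa" "i \<in> {1..s}"
  shows "block kappa i \<subseteq> {1..n}"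
proof -
  have "kappa i \<le> n" using cp_mono_le[OF assms(1), of i s] assms unfolding consecutive_partition_def by auto
  then show ?thesis unfolding block_def by auto
qed

lemma block_disj:
  assumes "consecutive_partition n s kappa" "i \<in> {1..s}" "i' \<in> {1..s}" "a \<in> block kappa i" "a \<in> block kappa i'"
  shows "i = i'"
proof (rule ccontr)
  assume ne: "i \<noteq> i'"
  { fix i i' assume "i \<in> {1..s}" "i' \<in> {1..s}" "a \<in> block kappa i" "a \<in> block kappa i'" "i < i'"
    then have "kappa i \<le> kappa (i' - 1)" using cp_mono_le[OF assms(1), of i "i'-1"] by auto
    then have False using \<open>a \<in> block kappa i\<close> \<open>a \<in> block kappa i'\<close> unfolding block_def by auto }
  then show False using ne assms by (metis linorder_neqE_nat)
qed

lemma block_ex: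
  assumes "consecutive_partition n s kappa" "a \<in> {1..n}"
  shows "\<exists>i\<in>{1..s}. a \<in> block kappa i"
proof -
  have ks: "kappa s = n" "kappa 0 = 0" using assms(1) unfolding consecutive_partition_def by auto
  define i where "i = (LEAST i. a \<le> kappa i)"
  have "a \<le> kappa i" unfolding i_def by (rule LeastI[of _ s]) (use ks assms in auto)
  moreover have "i \<le> s" unfolding i_def by (rule Least_le) (use ks assms in auto)
  moreover have "i \<noteq> 0" using \<open>a \<le> kappa i\<close> ks assms by (cases "i = 0") auto
  moreover have "\<not> a \<le> kappa (i - 1)" unfolding i_def
    by (rule not_less_Least) (use \<open>i \<noteq> 0\<close> in \<open>auto simp: i_def\<close>)
  ultimately show ?thesis unfolding block_def by (intro bexI[of _ i]) auto
qed

definition bidx :: "(nat \<Rightarrow> nat) \<Rightarrow> nat \<Rightarrow> nat \<Rightarrow> nat" where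
  "bidx kappa s a = (THE i. i \<in> {1..s} \<and> a \<in> block kappa i)"

lemma bidx_eq:
  assumes "consecutive_partition n s kappa" "i \<in> {1..s}" "a \<in> block kappa i"
  shows "bidx kappa s a = i"
  unfolding bidx_def using assms block_disj[OF assms(1)] by (intro the_equality) auto

lemma bidx:
  assumes "consecutive_partition n s kappa" "a \<in> {1..n}"
  shows "bidx kappa s a \<in> {1..s}" "a \<in> block kappa (bidx kappa s a)"
  using block_ex[OF assms] bidx_eq[OF assms(1)] by auto

lemma prefix_union:
  assumes "consecutive_partition n s kappa" "m \<le> s"
  shows "{1..kappa m} = (\<Union>i\<in>{1..m}. block kappa i)"
  using assms(2)
proof (induction m)
  case 0 then show ?case using assms(1) unfolding consecutive_partition_def by auto
next
  case (Suc m)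
  have "kappa m \<le> kappa (Suc m)" using cp_mono_le[OF assms(1), of m "Suc m"] Suc.prems by auto
  then have "{1..kappa (Suc m)} = {1..kappa m} \<union> block kappa (Suc m)" unfolding block_def by auto
  also have "\<dots> = (\<Union>i\<in>{1..Suc m}. block kappa i)" using Suc by (auto simp: atLeastAtMostSuc_conv)
  finally show ?case .
qed


lemma measure_eq_on_supp:
  assumes "A \<inter> set_pmf p = B \<inter> set_pmf p"
  shows "measure_pmf.prob p A = measure_pmf.prob p B"
  by (metis assms measure_Int_set_pmf)

lemma perm_eq_on:
  assumes "\<sigma> permutes S" "\<pi> permutes S" "\<forall>i\<in>S. \<sigma> i = \<pi> i"
  shows "\<sigma> = \<pi>"
proof
  fix x show "\<sigma> x = \<pi> x" using assms permutes_not_in[OF assms(1)] permutes_not_in[OF assms(2)]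
    by (cases "x \<in> S") auto
qed

definition gT :: "(nat \<Rightarrow> nat) pmf \<Rightarrow> nat \<Rightarrow> nat set \<Rightarrow> nat \<Rightarrow> real" where
  "gT p k S a = cprob p {\<sigma>. \<sigma> k = a} {\<sigma>. \<sigma> ` {1..k-1} = S}"

lemma prefix_prob:
  assumes Ld: "L_decomposable n p" and sup: "set_pmf p \<subseteq> {\<pi>. \<pi> permutes {1..n}}"
    and pi: "\<pi> permutes {1..n}" and kn: "k \<le> n"
  shows "measure_pmf.prob p {\<sigma>. \<forall>i\<in>{1..k}. \<sigma> i = \<pi> i}
         = (\<Prod>l\<in>{1..k}. gT p l (\<pi> ` {1..l-1}) (\<pi> l))"
  using kn
proof (induction k)
  case 0 then show ?case by simp
next
  case (Suc k)
  define Pre where "Pre = {\<sigma>. \<forall>i\<in>{1..k}. \<sigma> i = \<pi> i}"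
  define A where "A = {\<sigma>. \<sigma> (Suc k) = \<pi> (Suc k)}"
  define SE where "SE = {\<sigma>. \<sigma> ` {1..k} = \<pi> ` {1..k}}"
  have IH: "measure_pmf.prob p Pre = (\<Prod>l\<in>{1..k}. gT p l (\<pi> ` {1..l-1}) (\<pi> l))"
    using Suc unfolding Pre_def by simp
  have eqset: "{\<sigma>. \<forall>i\<in>{1..Suc k}. \<sigma> i = \<pi> i} = Pre \<inter> A"
    unfolding Pre_def A_def by (auto simp: atLeastAtMostSuc_conv)
  have prodeq: "(\<Prod>l\<in>{1..Suc k}. gT p l (\<pi> ` {1..l-1}) (\<pi> l))
      = (\<Prod>l\<in>{1..k}. gT p l (\<pi> ` {1..l-1}) (\<pi> l)) * gT p (Suc k) (\<pi> ` {1..k}) (\<pi> (Suc k))"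
    by (simp add: atLeastAtMostSuc_conv mult.commute)
  have gTdef: "gT p (Suc k) (\<pi> ` {1..k}) (\<pi> (Suc k)) = cprob p A SE"
    unfolding gT_def A_def SE_def by simp
  show ?case
  proof (cases "measure_pmf.prob p Pre = 0")
    case True
    have "measure_pmf.prob p (Pre \<inter> A) \<le> measure_pmf.prob p Pre"
      by (rule measure_pmf.finite_measure_mono) auto
    then have "measure_pmf.prob p (Pre \<inter> A) = 0" using True by (simp add: measure_le_0_iff)
    then show ?thesis using True IH eqset prodeq by simp
  next
    case False
    have pos: "measure_pmf.prob p Pre > 0" using False by (simp add: zero_less_measure_iff)
    have key: "cprob p A Pre = cprob p A SE"
    proof (cases "2 \<le> k \<and> k + 2 \<le> n")
      case True
      then show ?thesis using Ld pi pos unfolding L_decomposable_def Pre_def A_def SE_def by auto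
    next
      case nk: False
      show ?thesis
      proof (cases "k \<le> 1")
        case True
        then have "Pre = SE" unfolding Pre_def SE_def
          by (cases k) auto
        then show ?thesis by simp
      next
        case False
        then have kn1: "Suc k = n" using nk Suc.prems by auto
        have "Pre \<inter> set_pmf p \<subseteq> SE" unfolding Pre_def SE_def by auto
        have sub: "SE \<inter> set_pmf p \<subseteq> A"
        proof
          fix \<sigma> assume s: "\<sigma> \<in> SE \<inter> set_pmf p"
          then have sp: "\<sigma> permutes {1..n}" using sup by auto
          have "\<sigma> ` {1..n} = {1..n}" "\<pi> ` {1..n} = {1..n}" using sp pi by (simp_all add: permutes_image)
          moreover have "{1..n} = insert n {1..k}" using kn1 by auto
          ultimately have e: "insert (\<sigma> n) (\<sigma> ` {1..k}) = insert (\<pi> n) (\<pi> ` {1..k})" by auto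
          have "\<sigma> n \<notin> \<sigma> ` {1..k}" using injD[OF permutes_inj[OF sp]] kn1 by fastforce
          moreover have "\<pi> n \<notin> \<pi> ` {1..k}" using injD[OF permutes_inj[OF pi]] kn1 by fastforce
          moreover have "\<sigma> ` {1..k} = \<pi> ` {1..k}" using s unfolding SE_def by auto
          ultimately have "\<sigma> n = \<pi> n" using e by auto
          then show "\<sigma> \<in> A" unfolding A_def using kn1 by simp
        qed
        have sub2: "Pre \<inter> set_pmf p \<subseteq> A" using sub \<open>Pre \<inter> set_pmf p \<subseteq> SE\<close> by auto
        have pSE: "measure_pmf.prob p SE > 0"
        proof -
          have "measure_pmf.prob p (Pre \<inter> set_pmf p) \<le> measure_pmf.prob p (SE \<inter> set_pmf p)"
            using \<open>Pre \<inter> set_pmf p \<subseteq> SE\<close> by (intro measure_pmf.finite_measure_mono) auto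
          then show ?thesis using pos by (simp add: measure_Int_set_pmf)
        qed
        have "measure_pmf.prob p (A \<inter> Pre) = measure_pmf.prob p Pre"
          by (rule measure_eq_on_supp) (use sub2 in auto)
        moreover have "measure_pmf.prob p (A \<inter> SE) = measure_pmf.prob p SE"
          by (rule measure_eq_on_supp) (use sub in auto)
        ultimately show ?thesis using pos pSE unfolding cprob_def by simp
      qed
    qed
    have "measure_pmf.prob p (Pre \<inter> A) = measure_pmf.prob p Pre * cprob p A Pre"
      using pos unfolding cprob_def by (simp add: Int_commute)
    then show ?thesis using eqset prodeq gTdef key IH by simp
  qed
qed

lemma prod_form:
  assumes Ld: "L_decomposable n p" and sup: "set_pmf p \<subseteq> {\<pi>. \<pi> permutes {1..n}}"
    and pi: "\<pi> permutes {1..n}"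
  shows "pmf p \<pi> = (\<Prod>l\<in>{1..n}. gT p l (\<pi> ` {1..l-1}) (\<pi> l))"
proof -
  have "{\<sigma>. \<forall>i\<in>{1..n}. \<sigma> i = \<pi> i} \<inter> set_pmf p = {\<pi>} \<inter> set_pmf p"
  proof (intro set_eqI iffI)
    fix \<sigma> assume "\<sigma> \<in> {\<sigma>. \<forall>i\<in>{1..n}. \<sigma> i = \<pi> i} \<inter> set_pmf p"
    then show "\<sigma> \<in> {\<pi>} \<inter> set_pmf p" using sup pi perm_eq_on[of \<sigma> "{1..n}" \<pi>] by auto
  qed auto
  then have "measure_pmf.prob p {\<sigma>. \<forall>i\<in>{1..n}. \<sigma> i = \<pi> i} = pmf p \<pi>"
    using measure_eq_on_supp measure_pmf_single by metis
  then show ?thesis using prefix_prob[OF Ld sup pi, of n] by simp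
qed

lemma merge_algebra:
  fixes T :: "nat \<Rightarrow> 'b \<Rightarrow> real"
  assumes "finite N" "finite R" "\<forall>k\<in>N. \<exists>!i. i \<in> R \<and> k \<in> K i"
    "\<forall>i\<in>R. \<forall>k\<in>N. T k (w i) = (if k \<in> K i then T k x else T k z)"
  shows "(\<Prod>k\<in>N. T k x) * (\<Prod>k\<in>N. T k z) ^ card R = (\<Prod>k\<in>N. T k z) * (\<Prod>i\<in>R. \<Prod>k\<in>N. T k (w i))"
proof -
  have "(\<Prod>i\<in>R. \<Prod>k\<in>N. T k (w i)) = (\<Prod>k\<in>N. \<Prod>i\<in>R. T k (w i))" by (rule prod.swap)
  also have "\<dots> = (\<Prod>k\<in>N. T k x * T k z ^ (card R - 1))"
  proof (rule prod.cong[OF refl])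
    fix k assume k: "k \<in> N"
    then obtain i0 where i0: "i0 \<in> R" "k \<in> K i0" "\<And>i. i \<in> R \<Longrightarrow> k \<in> K i \<Longrightarrow> i = i0" using assms(3) by metis
    have "(\<Prod>i\<in>R. T k (w i)) = (\<Prod>i\<in>R. (if k \<in> K i then T k x else T k z))"
      using assms(4) k by auto
    also have "\<dots> = T k x * (\<Prod>i\<in>R - {i0}. (if k \<in> K i then T k x else T k z))"
      using i0(2) by (subst prod.remove[OF assms(2) i0(1)]) simp
    also have "(\<Prod>i\<in>R - {i0}. (if k \<in> K i then T k x else T k z)) = (\<Prod>i\<in>R - {i0}. T k z)"
    proof (intro prod.cong refl)
      fix i assume "i \<in> R - {i0}"
      then have "k \<notin> K i" using i0(3)[of i] by blast
      then show "(if k \<in> K i then T k x else T k z) = T k z" by simp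
    qed
    also have "\<dots> = T k z ^ (card R - 1)" using i0(1) assms(2) by simp
    finally show "(\<Prod>i\<in>R. T k (w i)) = T k x * T k z ^ (card R - 1)" .
  qed
  finally have e: "(\<Prod>i\<in>R. \<Prod>k\<in>N. T k (w i)) = (\<Prod>k\<in>N. T k x * T k z ^ (card R - 1))" .
  show ?thesis
  proof (cases "N = {}")
    case True then show ?thesis by simp
  next
    case False
    then obtain k where "k \<in> N" by auto
    then have cR: "card R \<ge> 1" using assms(2,3) by (metis card_0_eq empty_iff less_one not_le)
    have "(\<Prod>k\<in>N. T k z) * (\<Prod>k\<in>N. T k x * T k z ^ (card R - 1))
        = (\<Prod>k\<in>N. T k z * (T k x * T k z ^ (card R - 1)))" by (simp add: prod.distrib)
    also have "\<dots> = (\<Prod>k\<in>N. T k x * T k z ^ card R)"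
      using cR by (intro prod.cong refl) (metis (no_types, lifting) Suc_diff_le diff_Suc_1 mult.left_commute power_Suc)
    also have "\<dots> = (\<Prod>k\<in>N. T k x) * (\<Prod>k\<in>N. T k z) ^ card R"
      by (simp add: prod.distrib prod_power_distrib)
    finally show ?thesis using e by simp
  qed
qed


lemma image_prefix_eq:
  assumes cp: "consecutive_partition n s kappa" and i: "i \<in> {1..s}"
    and img: "\<forall>i\<in>{1..s}. \<sigma> ` block kappa i = \<sigma>' ` block kappa i"
    and k: "k \<in> block kappa i" and ag: "\<forall>a\<in>block kappa i. a \<le> k \<longrightarrow> \<sigma> a = \<sigma>' a"
  shows "\<sigma> ` {1..k-1} = \<sigma>' ` {1..k-1}" "\<sigma> k = \<sigma>' k"
proof -
  have k1: "kappa (i-1) < k" "k \<le> kappa i" using k unfolding block_def by auto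
  have "{1..k-1} = {1..kappa (i-1)} \<union> {kappa (i-1)+1..k-1}" using k1 by auto
  moreover have "{1..kappa (i-1)} = (\<Union>i'\<in>{1..i-1}. block kappa i')"
    by (rule prefix_union[OF cp]) (use i in auto)
  moreover have "\<sigma> ` (\<Union>i'\<in>{1..i-1}. block kappa i') = \<sigma>' ` (\<Union>i'\<in>{1..i-1}. block kappa i')"
    unfolding image_UN
  proof (intro SUP_cong refl)
    fix i' assume "i' \<in> {1..i-1}"
    then have "i' \<in> {1..s}" using i by auto
    then show "\<sigma> ` block kappa i' = \<sigma>' ` block kappa i'" using img by blast
  qed
  moreover have "\<sigma> ` {kappa (i-1)+1..k-1} = \<sigma>' ` {kappa (i-1)+1..k-1}"
    using ag k1 unfolding block_def by (intro image_cong refl) auto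
  ultimately show "\<sigma> ` {1..k-1} = \<sigma>' ` {1..k-1}" by (simp add: image_Un)
  show "\<sigma> k = \<sigma>' k" using ag k by auto
qed

lemma row_merge:
  assumes Ld: "L_decomposable n p" and sup: "set_pmf p \<subseteq> {\<pi>. \<pi> permutes {1..n}}"
    and cp: "consecutive_partition n s kappa"
    and x: "x permutes {1..n}" and z: "z permutes {1..n}" and w: "\<forall>i\<in>{1..s}. w i permutes {1..n}"
    and imgx: "\<forall>i\<in>{1..s}. x ` block kappa i = z ` block kappa i"
    and imgw: "\<forall>i\<in>{1..s}. \<forall>i'\<in>{1..s}. w i ` block kappa i' = z ` block kappa i'"
    and agx: "\<forall>i\<in>{1..s}. \<forall>a\<in>block kappa i. w i a = x a"
    and agz: "\<forall>i\<in>{1..s}. \<forall>i'\<in>{1..s}. i' \<noteq> i \<longrightarrow> (\<forall>a\<in>block kappa i'. w i a = z a)"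
  shows "pmf p x * pmf p z ^ s = pmf p z * (\<Prod>i\<in>{1..s}. pmf p (w i))"
proof -
  define T where "T = (\<lambda>k (\<sigma>::nat\<Rightarrow>nat). gT p k (\<sigma> ` {1..k-1}) (\<sigma> k))"
  have pf: "\<And>\<sigma>. \<sigma> permutes {1..n} \<Longrightarrow> pmf p \<sigma> = (\<Prod>k\<in>{1..n}. T k \<sigma>)"
    unfolding T_def using prod_form[OF Ld sup] by simp
  have uniq: "\<forall>k\<in>{1..n}. \<exists>!i. i \<in> {1..s} \<and> k \<in> block kappa i"
    using block_ex[OF cp] block_disj[OF cp] by metis
  have loc: "\<forall>i\<in>{1..s}. \<forall>k\<in>{1..n}. T k (w i) = (if k \<in> block kappa i then T k x else T k z)"
  proof (intro ballI)
    fix i k assume i: "i \<in> {1..s}" and k: "k \<in> {1..n}"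
    define i' where "i' = bidx kappa s k"
    have i': "i' \<in> {1..s}" "k \<in> block kappa i'" using bidx[OF cp k] unfolding i'_def by auto
    show "T k (w i) = (if k \<in> block kappa i then T k x else T k z)"
    proof (cases "i' = i")
      case True
      have img2: "\<forall>i\<in>{1..s}. w i' ` block kappa i = x ` block kappa i" using imgw imgx i' by auto
      have "w i ` {1..k-1} = x ` {1..k-1}" "w i k = x k"
        using image_prefix_eq[OF cp i' (1) img2 i'(2)] agx i' True by auto
      then show ?thesis using True i' unfolding T_def by simp
    next
      case False
      have "k \<notin> block kappa i" using block_disj[OF cp i i'(1) _ i'(2)] False by auto
      have img2: "\<forall>i''\<in>{1..s}. w i ` block kappa i'' = z ` block kappa i''" using imgw i by auto
      have "w i ` {1..k-1} = z ` {1..k-1}" "w i k = z k"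
        using image_prefix_eq[OF cp i' (1) img2 i'(2)] agz i' i False by auto
      then show ?thesis using \<open>k \<notin> block kappa i\<close> unfolding T_def by simp
    qed
  qed
  have "(\<Prod>k\<in>{1..n}. T k x) * (\<Prod>k\<in>{1..n}. T k z) ^ card {1..s}
      = (\<Prod>k\<in>{1..n}. T k z) * (\<Prod>i\<in>{1..s}. \<Prod>k\<in>{1..n}. T k (w i))"
    using merge_algebra[of "{1..n}" "{1..s}" "block kappa" T w x z] uniq loc by simp
  moreover have "(\<Prod>i\<in>{1..s}. pmf p (w i)) = (\<Prod>i\<in>{1..s}. \<Prod>k\<in>{1..n}. T k (w i))"
    using w pf by (intro prod.cong) auto
  ultimately show ?thesis using pf[OF x] pf[OF z] by simp
qed


locale fib =
  fixes n s t :: nat and kappa lam :: "nat \<Rightarrow> nat" and z :: "nat \<Rightarrow> nat"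
  assumes cpk: "consecutive_partition n s kappa" and cpl: "consecutive_partition n t lam"
    and zp: "z permutes {1..n}"
begin

definition "Phi = {\<sigma>. \<sigma> permutes {1..n} \<and> (\<forall>i\<in>{1..s}. \<sigma> ` block kappa i = z ` block kappa i)
   \<and> (\<forall>j\<in>{1..t}. \<sigma> -` block lam j = z -` block lam j)}"
definition "cl a = (bidx kappa s a, bidx lam t (z a))"
definition "mixf f a = (if a \<in> {1..n} then f (cl a) a else a)"
definition "Xc c \<sigma> = graph_block \<sigma> (block kappa (fst c)) (block lam (snd c))"

lemma z_Phi: "z \<in> Phi" unfolding Phi_def using zp by auto

lemma Phi_perm: "\<sigma> \<in> Phi \<Longrightarrow> \<sigma> permutes {1..n}" unfolding Phi_def by auto

lemma cl_in:
  assumes "a \<in> {1..n}"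
  shows "cl a \<in> {1..s} \<times> {1..t}" "a \<in> block kappa (fst (cl a))" "z a \<in> block lam (snd (cl a))"
proof -
  have za: "z a \<in> {1..n}" using assms permutes_in_image[OF zp, of a] by blast
  show "cl a \<in> {1..s} \<times> {1..t}" "a \<in> block kappa (fst (cl a))" "z a \<in> block lam (snd (cl a))"
    unfolding cl_def using bidx[OF cpk assms] bidx[OF cpl za] by auto
qed

lemma cl_eq:
  assumes "i \<in> {1..s}" "a \<in> block kappa i" "j \<in> {1..t}" "z a \<in> block lam j"
  shows "cl a = (i, j)"
  unfolding cl_def using bidx_eq[OF cpk assms(1,2)] bidx_eq[OF cpl assms(3,4)] by simp

lemma Phi_col:
  assumes "\<sigma> \<in> Phi" "a \<in> {1..n}"
  shows "\<sigma> a \<in> block lam (snd (cl a))"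
proof -
  have j: "snd (cl a) \<in> {1..t}" using cl_in[OF assms(2)] by auto
  have "a \<in> z -` block lam (snd (cl a))" using cl_in[OF assms(2)] by auto
  moreover have "\<sigma> -` block lam (snd (cl a)) = z -` block lam (snd (cl a))"
    using assms(1) j unfolding Phi_def by blast
  ultimately show ?thesis by blast
qed

lemma Phi_row:
  assumes "\<sigma> \<in> Phi" "a \<in> {1..n}"
  shows "\<sigma> a \<in> z ` block kappa (fst (cl a))"
proof -
  have i: "fst (cl a) \<in> {1..s}" using cl_in[OF assms(2)] by auto
  then have "\<sigma> ` block kappa (fst (cl a)) = z ` block kappa (fst (cl a))"
    using assms(1) unfolding Phi_def by auto
  then show ?thesis using cl_in(2)[OF assms(2)] by blast
qed

lemma col_unique:
  assumes "j \<in> {1..t}" "j' \<in> {1..t}" "v \<in> block lam j" "v \<in> block lam j'"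
  shows "j = j'"
  using block_disj[OF cpl assms] .

lemma Xc_char:
  assumes col: "\<forall>a\<in>{1..n}. \<sigma> a \<in> block lam (snd (cl a))" and c: "c \<in> {1..s} \<times> {1..t}"
  shows "Xc c \<sigma> = {(a, \<sigma> a) | a. a \<in> {1..n} \<and> cl a = c}"
proof -
  obtain i j where c': "c = (i, j)" "i \<in> {1..s}" "j \<in> {1..t}" using c by auto
  have "a \<in> block kappa i \<and> \<sigma> a \<in> block lam j \<longleftrightarrow> a \<in> {1..n} \<and> cl a = c" for a
  proof
    assume h: "a \<in> block kappa i \<and> \<sigma> a \<in> block lam j"
    then have a: "a \<in> {1..n}" using block_sub[OF cpk c'(2)] by auto
    have "fst (cl a) = i" using bidx_eq[OF cpk c'(2)] h unfolding cl_def by auto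
    moreover have "snd (cl a) = j"
      using col_unique[of "snd (cl a)" j "\<sigma> a"] cl_in(1)[OF a] col a h c' by auto
    ultimately show "a \<in> {1..n} \<and> cl a = c" using a c' by (metis prod.collapse)
  next
    assume h: "a \<in> {1..n} \<and> cl a = c"
    then have "a \<in> block kappa (fst (cl a))" "\<sigma> a \<in> block lam (snd (cl a))" using cl_in(2)[of a] col by auto
    then show "a \<in> block kappa i \<and> \<sigma> a \<in> block lam j" using h c' by simp
  qed
  then show ?thesis unfolding Xc_def graph_block_def c' by auto
qed

lemma Phi_colOK: "\<sigma> \<in> Phi \<Longrightarrow> \<forall>a\<in>{1..n}. \<sigma> a \<in> block lam (snd (cl a))"
  using Phi_col by auto

lemma mix_val: "a \<in> {1..n} \<Longrightarrow> mixf f a = f (cl a) a"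
  unfolding mixf_def by simp

lemma mix_Phi:
  assumes f: "\<forall>c\<in>{1..s} \<times> {1..t}. f c \<in> Phi"
  shows "mixf f \<in> Phi"
proof -
  let ?m = "mixf f"
  have fc: "f (cl a) \<in> Phi" if "a \<in> {1..n}" for a using f cl_in(1)[OF that] by auto
  have into: "?m ` {1..n} \<subseteq> {1..n}"
  proof
    fix v assume "v \<in> ?m ` {1..n}"
    then obtain a where a: "a \<in> {1..n}" "v = f (cl a) a" by (auto simp: mix_val)
    then show "v \<in> {1..n}" using permutes_in_image[OF Phi_perm[OF fc[OF a(1)]], of a] by blast
  qed
  have inj: "inj_on ?m {1..n}"
  proof
    fix a a' assume a: "a \<in> {1..n}" and a': "a' \<in> {1..n}" and e: "?m a = ?m a'"
    have ma: "?m a = f (cl a) a" "?m a' = f (cl a') a'" using mix_val a a' by auto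
    have r: "?m a \<in> z ` block kappa (fst (cl a))" "?m a' \<in> z ` block kappa (fst (cl a'))"
      unfolding ma using Phi_row[OF fc[OF a] a] Phi_row[OF fc[OF a'] a'] by auto
    have cc: "?m a \<in> block lam (snd (cl a))" "?m a' \<in> block lam (snd (cl a'))"
      unfolding ma using Phi_col[OF fc[OF a] a] Phi_col[OF fc[OF a'] a'] by auto
    obtain b b' where b: "b \<in> block kappa (fst (cl a))" "?m a = z b"
      and b': "b' \<in> block kappa (fst (cl a'))" "?m a' = z b'" using r by auto
    have "b = b'" using b b' e permutes_inj[OF zp] by (auto dest: injD)
    then have "fst (cl a) = fst (cl a')"
      using block_disj[OF cpk, of "fst (cl a)" "fst (cl a')" b] b b' cl_in(1)[OF a] cl_in(1)[OF a'] by auto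
    moreover have "snd (cl a) = snd (cl a')"
      using col_unique[of "snd (cl a)" "snd (cl a')" "?m a"] cc e cl_in(1)[OF a] cl_in(1)[OF a'] by auto
    ultimately have "cl a = cl a'" by (simp add: prod_eq_iff)
    moreover have "f (cl a) a = f (cl a') a'" using e ma by simp
    ultimately have "f (cl a) a = f (cl a) a'" by simp
    then show "a = a'" using permutes_inj[OF Phi_perm[OF fc[OF a]]] by (auto dest: injD)
  qed
  have "?m ` {1..n} = {1..n}" using endo_inj_surj[OF _ into inj] by simp
  then have bij: "bij_betw ?m {1..n} {1..n}" using inj by (simp add: bij_betw_def)
  have perm: "?m permutes {1..n}" by (rule bij_imp_permutes[OF bij]) (auto simp: mixf_def)
  have rows: "?m ` block kappa i = z ` block kappa i" if i: "i \<in> {1..s}" for i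
  proof
    show "?m ` block kappa i \<subseteq> z ` block kappa i"
    proof
      fix v assume "v \<in> ?m ` block kappa i"
      then obtain a where a: "a \<in> block kappa i" "v = ?m a" by auto
      have an: "a \<in> {1..n}" using a block_sub[OF cpk i] by auto
      have "fst (cl a) = i" using bidx_eq[OF cpk i a(1)] unfolding cl_def by simp
      then show "v \<in> z ` block kappa i" using Phi_row[OF fc[OF an] an] a by (simp add: mix_val[OF an])
    qed
  next
    show "z ` block kappa i \<subseteq> ?m ` block kappa i"
    proof
      fix v assume "v \<in> z ` block kappa i"
      then obtain b where b: "b \<in> block kappa i" "v = z b" by auto
      have bn: "b \<in> {1..n}" using b block_sub[OF cpk i] by auto
      have vn: "v \<in> {1..n}" using permutes_in_image[OF zp, of b] bn b(2) by blast
      obtain j where j: "j \<in> {1..t}" "v \<in> block lam j" using block_ex[OF cpl vn] by auto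
      have sP: "f (i, j) \<in> Phi" using f i j by auto
      then have "v \<in> f (i, j) ` block kappa i" using b i unfolding Phi_def by auto
      then obtain a where a: "a \<in> block kappa i" "v = f (i, j) a" by auto
      have an: "a \<in> {1..n}" using a block_sub[OF cpk i] by auto
      have "snd (cl a) = j"
        using col_unique[of "snd (cl a)" j v] Phi_col[OF sP an] a j cl_in(1)[OF an] by auto
      moreover have "fst (cl a) = i" using bidx_eq[OF cpk i a(1)] unfolding cl_def by simp
      ultimately have "cl a = (i, j)" by (simp add: prod_eq_iff)
      then have "?m a = v" using a by (simp add: mix_val[OF an])
      then show "v \<in> ?m ` block kappa i" using a(1) by (metis image_eqI)
    qed
  qed
  have cols: "?m -` block lam j = z -` block lam j" if j: "j \<in> {1..t}" for j
  proof (intro set_eqI)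
    fix a show "a \<in> ?m -` block lam j \<longleftrightarrow> a \<in> z -` block lam j"
    proof (cases "a \<in> {1..n}")
      case False
      then have "?m a = a" "z a = a" using permutes_not_in[OF zp] by (auto simp: mixf_def)
      then show ?thesis by simp
    next
      case True
      have m1: "?m a \<in> block lam (snd (cl a))" using Phi_col[OF fc[OF True] True] by (simp add: mix_val[OF True])
      have z1: "z a \<in> block lam (snd (cl a))" using cl_in(3)[OF True] .
      have cj: "snd (cl a) \<in> {1..t}" using cl_in(1)[OF True] by auto
      show ?thesis using col_unique[OF cj j] m1 z1 by auto
    qed
  qed
  show ?thesis unfolding Phi_def using perm rows cols by auto
qed

lemma mix_colOK:
  assumes f: "\<forall>c\<in>{1..s} \<times> {1..t}. f c \<in> Phi"
  shows "\<forall>a\<in>{1..n}. mixf f a \<in> block lam (snd (cl a))"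
proof
  fix a assume a: "a \<in> {1..n}"
  have "f (cl a) \<in> Phi" using bspec[OF f cl_in(1)[OF a]] .
  then have "f (cl a) a \<in> block lam (snd (cl a))" using Phi_col[OF _ a] by blast
  then show "mixf f a \<in> block lam (snd (cl a))" using mix_val[OF a] by simp
qed

lemma mix_X:
  assumes f: "\<forall>c\<in>{1..s} \<times> {1..t}. f c \<in> Phi" and c: "c \<in> {1..s} \<times> {1..t}"
  shows "Xc c (mixf f) = Xc c (f c)"
proof -
  have "Xc c (mixf f) = {(a, mixf f a) | a. a \<in> {1..n} \<and> cl a = c}"
    by (rule Xc_char[OF mix_colOK[OF f] c])
  also have "\<dots> = {(a, f c a) | a. a \<in> {1..n} \<and> cl a = c}"
    by (auto simp: mix_val)
  also have "\<dots> = Xc c (f c)" using Xc_char[OF Phi_colOK c, of "f c"] f c by auto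
  finally show ?thesis .
qed

lemma X_inj:
  assumes "\<sigma> \<in> Phi" "\<sigma>' \<in> Phi" "\<forall>c\<in>{1..s} \<times> {1..t}. Xc c \<sigma> = Xc c \<sigma>'"
  shows "\<sigma> = \<sigma>'"
proof (rule perm_eq_on[OF Phi_perm[OF assms(1)] Phi_perm[OF assms(2)]], intro ballI)
  fix a assume a: "a \<in> {1..n}"
  have "(a, \<sigma> a) \<in> Xc (cl a) \<sigma>" using Xc_char[OF Phi_colOK[OF assms(1)] cl_in(1)[OF a]] a by auto
  then have "(a, \<sigma> a) \<in> Xc (cl a) \<sigma>'" using assms(3) cl_in(1)[OF a] by auto
  then show "\<sigma> a = \<sigma>' a" using Xc_char[OF Phi_colOK[OF assms(2)] cl_in(1)[OF a]] by auto
qed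

lemma Y_iff:
  assumes "\<sigma> permutes {1..n}"
  shows "(map (\<lambda>i. \<sigma> ` block kappa i) [1..<s+1], map (\<lambda>j. inv \<sigma> ` block lam j) [1..<t+1])
       = (map (\<lambda>i. z ` block kappa i) [1..<s+1], map (\<lambda>j. inv z ` block lam j) [1..<t+1])
     \<longleftrightarrow> \<sigma> \<in> Phi"
proof -
  have "inv \<sigma> ` B = \<sigma> -` B" for B using bij_vimage_eq_inv_image[OF permutes_bij[OF assms]] by simp
  moreover have "inv z ` B = z -` B" for B using bij_vimage_eq_inv_image[OF permutes_bij[OF zp]] by simp
  moreover have "set [1..<s+1] = {1..s}" "set [1..<t+1] = {1..t}" by auto
  ultimately show ?thesis unfolding Phi_def using assms by (simp add: map_eq_conv)
qed

end


lemma pmf_inv: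
  assumes sup: "set_pmf p \<subseteq> {\<pi>. \<pi> permutes {1..n}}" and s: "\<sigma> permutes {1..n}"
  shows "pmf (map_pmf inv p) (inv \<sigma>) = pmf p \<sigma>"
proof -
  have "(inv -` {inv \<sigma>}) \<inter> set_pmf p = {\<sigma>} \<inter> set_pmf p"
  proof (intro set_eqI iffI)
    fix \<tau> assume h: "\<tau> \<in> (inv -` {inv \<sigma>}) \<inter> set_pmf p"
    then have "\<tau> permutes {1..n}" using sup by auto
    then have "\<tau> = inv (inv \<tau>)" using permutes_inv_inv by metis
    also have "\<dots> = inv (inv \<sigma>)" using h by auto
    also have "\<dots> = \<sigma>" using permutes_inv_inv[OF s] .
    finally show "\<tau> \<in> {\<sigma>} \<inter> set_pmf p" using h by auto
  qed auto
  then show ?thesis unfolding pmf_map using measure_eq_on_supp measure_pmf_single by metis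
qed

lemma inv_image_vimage: "\<sigma> permutes S \<Longrightarrow> inv \<sigma> ` B = \<sigma> -` B"
  using bij_vimage_eq_inv_image[OF permutes_bij] by metis

context fib
begin

lemma key_formula:
  assumes Ld: "L_decomposable n p" and Ldi: "L_decomposable n (map_pmf inv p)"
    and sup: "set_pmf p \<subseteq> {\<pi>. \<pi> permutes {1..n}}"
    and x: "x \<in> Phi" and hz: "pmf p z > 0"
  shows "pmf p x * pmf p z ^ (s * t) =
     pmf p z * (\<Prod>c\<in>{1..s} \<times> {1..t}. pmf p (mixf (\<lambda>c'. if c' = c then x else z)))"
proof -
  define wr where "wr i = mixf (\<lambda>c. if fst c = i then x else z)" for i
  define v where "v c = mixf (\<lambda>c'. if c' = c then x else z)" for c
  have fam1: "\<forall>c\<in>{1..s} \<times> {1..t}. (if fst c = i then x else z) \<in> Phi" for i using x z_Phi by auto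
  have fam2: "\<forall>c'\<in>{1..s} \<times> {1..t}. (if c' = c then x else z) \<in> Phi" for c using x z_Phi by auto
  have wrP: "wr i \<in> Phi" for i unfolding wr_def by (rule mix_Phi[OF fam1])
  have vP: "v c \<in> Phi" for c unfolding v_def by (rule mix_Phi[OF fam2])
  have wr_val: "wr i a = (if fst (cl a) = i then x a else z a)" if "a \<in> {1..n}" for i a
    unfolding wr_def using mix_val[OF that] by simp
  have v_val: "v c a = (if cl a = c then x a else z a)" if "a \<in> {1..n}" for c a
    unfolding v_def using mix_val[OF that] by simp
  have xp: "x permutes {1..n}" and zp': "z permutes {1..n}" using Phi_perm[OF x] zp by auto
  have step1: "pmf p x * pmf p z ^ s = pmf p z * (\<Prod>i\<in>{1..s}. pmf p (wr i))"
  proof (rule row_merge[OF Ld sup cpk xp zp'])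
    show "\<forall>i\<in>{1..s}. wr i permutes {1..n}" using Phi_perm[OF wrP] by auto
    show "\<forall>i\<in>{1..s}. x ` block kappa i = z ` block kappa i" using x unfolding Phi_def by auto
    show "\<forall>i\<in>{1..s}. \<forall>i'\<in>{1..s}. wr i ` block kappa i' = z ` block kappa i'"
      using wrP unfolding Phi_def by auto
    show "\<forall>i\<in>{1..s}. \<forall>a\<in>block kappa i. wr i a = x a"
    proof (intro ballI)
      fix i a assume i: "i \<in> {1..s}" and a: "a \<in> block kappa i"
      have an: "a \<in> {1..n}" using a block_sub[OF cpk i] by auto
      have "fst (cl a) = i" using bidx_eq[OF cpk i a] unfolding cl_def by simp
      then show "wr i a = x a" using wr_val[OF an] by simp
    qed
    show "\<forall>i\<in>{1..s}. \<forall>i'\<in>{1..s}. i' \<noteq> i \<longrightarrow> (\<forall>a\<in>block kappa i'. wr i a = z a)"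
    proof (intro ballI impI)
      fix i i' a assume i: "i \<in> {1..s}" and i': "i' \<in> {1..s}" "i' \<noteq> i" and a: "a \<in> block kappa i'"
      have an: "a \<in> {1..n}" using a block_sub[OF cpk i'(1)] by auto
      have "fst (cl a) = i'" using bidx_eq[OF cpk i'(1) a] unfolding cl_def by simp
      then show "wr i a = z a" using wr_val[OF an] i' by simp
    qed
  qed
  have supi: "set_pmf (map_pmf inv p) \<subseteq> {\<pi>. \<pi> permutes {1..n}}"
    using sup by (auto intro: permutes_inv)
  have step2: "pmf p (wr i) * pmf p z ^ t = pmf p z * (\<Prod>j\<in>{1..t}. pmf p (v (i, j)))"
    if i: "i \<in> {1..s}" for i
  proof -
    have "pmf (map_pmf inv p) (inv (wr i)) * pmf (map_pmf inv p) (inv z) ^ t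
        = pmf (map_pmf inv p) (inv z) * (\<Prod>j\<in>{1..t}. pmf (map_pmf inv p) (inv (v (i, j))))"
    proof (rule row_merge[OF Ldi supi cpl])
      show "inv (wr i) permutes {1..n}" "inv z permutes {1..n}"
        using permutes_inv Phi_perm[OF wrP] zp by auto
      show "\<forall>j\<in>{1..t}. inv (v (i, j)) permutes {1..n}" using permutes_inv Phi_perm[OF vP] by auto
      have img: "inv \<sigma> ` block lam j = inv z ` block lam j" if "\<sigma> \<in> Phi" "j \<in> {1..t}" for \<sigma> j
      proof -
        have "inv \<sigma> ` block lam j = \<sigma> -` block lam j" by (rule inv_image_vimage[OF Phi_perm[OF that(1)]])
        also have "\<dots> = z -` block lam j" using that unfolding Phi_def by blast
        also have "\<dots> = inv z ` block lam j" by (rule inv_image_vimage[OF zp, symmetric])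
        finally show ?thesis .
      qed
      show "\<forall>j\<in>{1..t}. inv (wr i) ` block lam j = inv z ` block lam j"
        using img[OF wrP] by blast
      show "\<forall>j\<in>{1..t}. \<forall>j'\<in>{1..t}. inv (v (i, j)) ` block lam j' = inv z ` block lam j'"
        using img[OF vP] by blast
      show "\<forall>j\<in>{1..t}. \<forall>b\<in>block lam j. inv (v (i, j)) b = inv (wr i) b"
      proof (intro ballI)
        fix j b assume j: "j \<in> {1..t}" and b: "b \<in> block lam j"
        have bn: "b \<in> {1..n}" using b block_sub[OF cpl j] by auto
        define a where "a = inv (wr i) b"
        have wp: "wr i permutes {1..n}" using Phi_perm[OF wrP] .
        have wa: "wr i a = b" unfolding a_def using permutes_inverses(1)[OF wp] by simp
        have an: "a \<in> {1..n}" unfolding a_def using permutes_in_image[OF permutes_inv[OF wp]] bn by blast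
        have "snd (cl a) = j"
          using col_unique[of "snd (cl a)" j b] Phi_col[OF wrP an] wa cl_in(1)[OF an] j b by auto
        then have "v (i, j) a = wr i a" using v_val[OF an] wr_val[OF an] by (auto simp: prod_eq_iff)
        then have "v (i, j) a = b" using wa by simp
        then have "inv (v (i, j)) b = a" using permutes_inv_eq[OF Phi_perm[OF vP]] by blast
        then show "inv (v (i, j)) b = inv (wr i) b" unfolding a_def .
      qed
      show "\<forall>j\<in>{1..t}. \<forall>j'\<in>{1..t}. j' \<noteq> j \<longrightarrow> (\<forall>b\<in>block lam j'. inv (v (i, j)) b = inv z b)"
      proof (intro ballI impI)
        fix j j' b assume j: "j \<in> {1..t}" and j': "j' \<in> {1..t}" "j' \<noteq> j" and b: "b \<in> block lam j'"
        have bn: "b \<in> {1..n}" using b block_sub[OF cpl j'(1)] by auto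
        define a where "a = inv z b"
        have za: "z a = b" unfolding a_def using permutes_inverses(1)[OF zp] by simp
        have an: "a \<in> {1..n}" unfolding a_def using permutes_in_image[OF permutes_inv[OF zp]] bn by blast
        have "snd (cl a) = j'"
          using col_unique[of "snd (cl a)" j' b] cl_in(3)[OF an] za cl_in(1)[OF an] j' b by auto
        then have "cl a \<noteq> (i, j)" using j' by auto
        then have "v (i, j) a = b" using v_val[OF an] za by simp
        then have "inv (v (i, j)) b = a" using permutes_inv_eq[OF Phi_perm[OF vP]] by blast
        then show "inv (v (i, j)) b = inv z b" unfolding a_def .
      qed
    qed
    moreover have "pmf (map_pmf inv p) (inv \<sigma>) = pmf p \<sigma>" if "\<sigma> \<in> Phi" for \<sigma>
      by (rule pmf_inv[OF sup Phi_perm[OF that]])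
    ultimately show ?thesis using wrP vP z_Phi by simp
  qed
  define H where "H = pmf p z"
  have e1: "pmf p x * H ^ s * H ^ (s * t) = H * ((\<Prod>i\<in>{1..s}. pmf p (wr i)) * H ^ (s * t))"
    using step1 unfolding H_def by simp
  have e2: "(\<Prod>i\<in>{1..s}. pmf p (wr i)) * H ^ (s * t) = (\<Prod>i\<in>{1..s}. pmf p (wr i) * H ^ t)"
    by (simp add: prod.distrib power_mult[symmetric] mult.commute)
  have e3: "(\<Prod>i\<in>{1..s}. pmf p (wr i) * H ^ t) = (\<Prod>i\<in>{1..s}. H * (\<Prod>j\<in>{1..t}. pmf p (v (i, j))))"
    using step2 unfolding H_def by (intro prod.cong) auto
  have e4: "(\<Prod>i\<in>{1..s}. H * (\<Prod>j\<in>{1..t}. pmf p (v (i, j)))) = H ^ s * (\<Prod>i\<in>{1..s}. \<Prod>j\<in>{1..t}. pmf p (v (i, j)))"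
    by (simp add: prod.distrib)
  have e5: "(\<Prod>i\<in>{1..s}. \<Prod>j\<in>{1..t}. pmf p (v (i, j))) = (\<Prod>c\<in>{1..s} \<times> {1..t}. pmf p (v c))"
    by (simp add: prod.cartesian_product)
  have "pmf p x * H ^ (s * t) * H ^ s = H * (\<Prod>c\<in>{1..s} \<times> {1..t}. pmf p (v c)) * H ^ s"
  proof -
    have "pmf p x * H ^ s * H ^ (s * t) = H * (H ^ s * (\<Prod>c\<in>{1..s} \<times> {1..t}. pmf p (v c)))"
      using e1 unfolding e2 e3 e4 e5 .
    then show ?thesis by (simp add: ac_simps)
  qed
  moreover have "H > 0" unfolding H_def by (rule hz)
  ultimately show ?thesis unfolding v_def H_def by simp
qed

end

lemma pmf_prop_eq:
  assumes h: "\<And>x. pmf r x = K * pmf r' x" and fin: "finite (set_pmf r)" and K: "K > 0"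
  shows "r = r'"
proof -
  have sub: "set_pmf r' \<subseteq> set_pmf r"
  proof
    fix x assume "x \<in> set_pmf r'"
    then have "pmf r' x > 0" by (simp add: pmf_positive)
    then have "pmf r x > 0" using h K by simp
    then show "x \<in> set_pmf r" by (simp add: set_pmf_iff)
  qed
  have "1 = (\<Sum>x\<in>set_pmf r. pmf r x)" using sum_pmf_eq_1[OF fin] by simp
  also have "\<dots> = K * (\<Sum>x\<in>set_pmf r. pmf r' x)" using h by (simp add: sum_distrib_left)
  also have "(\<Sum>x\<in>set_pmf r. pmf r' x) = 1" using sum_pmf_eq_1[OF fin sub] .
  finally have "K = 1" by simp
  then show ?thesis using h by (intro pmf_eqI) simp
qed

lemma indep_vars_map_Pi:
  fixes X :: "'i \<Rightarrow> 'a \<Rightarrow> 'b"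
  assumes eq: "map_pmf (\<lambda>\<omega>. restrict (\<lambda>i. X i \<omega>) I) q = Pi_pmf I undefined m" and fin: "finite I"
  shows "prob_space.indep_vars (measure_pmf q) (\<lambda>_. count_space UNIV) X I"
proof (cases "I = {}")
  case True
  show ?thesis
    by (subst prob_space.indep_vars_def [OF measure_pmf.prob_space_axioms],
        subst prob_space.indep_sets_def [OF measure_pmf.prob_space_axioms]) (simp_all add: True)
next
  case False
  define B where "B = (\<lambda>\<omega>. restrict (\<lambda>i. X i \<omega>) I)"
  have ind: "prob_space.indep_vars (measure_pmf (Pi_pmf I undefined m)) (\<lambda>_. count_space UNIV) (\<lambda>x f. f x) I"
    by (rule indep_vars_Pi_pmf[OF fin])
  have sig: "sets (count_space UNIV) = sigma_sets (space (count_space UNIV)) (Pow UNIV)"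
    by (metis sets_count_space space_count_space sigma_algebra.sigma_sets_eq sigma_algebra_Pow)
  have st: "Int_stable (Pow UNIV)" by (auto simp: Int_stable_def)
  note finP = prob_space.indep_vars_finite[OF measure_pmf.prob_space_axioms[of "Pi_pmf I undefined m"] False fin, where M'="\<lambda>_. count_space UNIV" and E="\<lambda>_. Pow UNIV"]
  note finQ = prob_space.indep_vars_finite[OF measure_pmf.prob_space_axioms[of q] False fin, where M'="\<lambda>_. count_space UNIV" and E="\<lambda>_. Pow UNIV"]
  have L: "\<forall>A\<in>(\<Pi> i\<in>I. Pow UNIV). measure (Pi_pmf I undefined m) (\<Inter>j\<in>I. (\<lambda>f. f j) -` A j \<inter> space (Pi_pmf I undefined m))
       = (\<Prod>j\<in>I. measure (Pi_pmf I undefined m) ((\<lambda>f. f j) -` A j \<inter> space (Pi_pmf I undefined m)))"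
    using ind finP[of "\<lambda>x f. f x"] sig st by simp
  have "\<forall>A\<in>(\<Pi> i\<in>I. Pow UNIV). measure q (\<Inter>j\<in>I. X j -` A j \<inter> space q)
       = (\<Prod>j\<in>I. measure q (X j -` A j \<inter> space q))"
  proof
    fix A :: "'i \<Rightarrow> 'b set" assume A: "A \<in> (\<Pi> i\<in>I. Pow UNIV)"
    have m: "measure (Pi_pmf I undefined m) S = measure q (B -` S)" for S
      using eq unfolding B_def[symmetric] by (metis measure_map_pmf)
    have v1: "B -` (\<Inter>j\<in>I. (\<lambda>f::'i\<Rightarrow>'b. f j) -` A j) = (\<Inter>j\<in>I. X j -` A j)"
      unfolding B_def using False by auto
    have v2: "B -` ((\<lambda>f::'i\<Rightarrow>'b. f j) -` A j) = X j -` A j" if "j \<in> I" for j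
      unfolding B_def using that by auto
    have L': "measure q (B -` (\<Inter>j\<in>I. (\<lambda>f::'i\<Rightarrow>'b. f j) -` A j))
        = (\<Prod>j\<in>I. measure q (B -` ((\<lambda>f::'i\<Rightarrow>'b. f j) -` A j)))"
      using L A m by simp
    have "(\<Prod>j\<in>I. measure q (B -` ((\<lambda>f::'i\<Rightarrow>'b. f j) -` A j))) = (\<Prod>j\<in>I. measure q (X j -` A j))"
      using v2 by (intro prod.cong) auto
    then show "measure q (\<Inter>j\<in>I. X j -` A j \<inter> space q) = (\<Prod>j\<in>I. measure q (X j -` A j \<inter> space q))"
      using L' v1 by simp
  qed
  then show ?thesis using finQ[of X] sig st by simp
qed


lemma alg: fixes Hn PE PDs H V :: real
  shows "Hn > 0 \<Longrightarrow> PE > 0 \<Longrightarrow> PDs > 0 \<Longrightarrow> (H * V / Hn) / PE = (H * PDs / (Hn * PE)) * (V / PDs)"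
  by (simp add: field_simps)

context fib
begin

lemma indep_fiber:
  assumes Ld: "L_decomposable n p" and Ldi: "L_decomposable n (map_pmf inv p)"
    and sup: "set_pmf p \<subseteq> {\<pi>. \<pi> permutes {1..n}}" and hz: "z \<in> set_pmf p"
  shows "prob_space.indep_vars (measure_pmf (cond_pmf p {\<omega>.
      (map (\<lambda>i. \<omega> ` block kappa i) [1..<s+1], map (\<lambda>j. inv \<omega> ` block lam j) [1..<t+1])
       = (map (\<lambda>i. z ` block kappa i) [1..<s+1], map (\<lambda>j. inv z ` block lam j) [1..<t+1])}))
      (\<lambda>_. count_space UNIV) Xc ({1..s} \<times> {1..t})"
proof -
  define I where "I = {1..s} \<times> {1..t}"
  have finI: "finite I" unfolding I_def by simp
  define E where "E = {\<omega>.
      (map (\<lambda>i. \<omega> ` block kappa i) [1..<s+1], map (\<lambda>j. inv \<omega> ` block lam j) [1..<t+1])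
       = (map (\<lambda>i. z ` block kappa i) [1..<s+1], map (\<lambda>j. inv z ` block lam j) [1..<t+1])}"
  have zE: "z \<in> E" unfolding E_def by simp
  have Ene: "set_pmf p \<inter> E \<noteq> {}" using zE hz by auto
  define q where "q = cond_pmf p E"
  have setq: "set_pmf q = set_pmf p \<inter> E" unfolding q_def by (rule set_cond_pmf[OF Ene])
  have PhiE: "\<omega> \<in> Phi \<Longrightarrow> \<omega> \<in> E" for \<omega> unfolding E_def using Y_iff[OF Phi_perm] by blast
  have setqPhi: "set_pmf q \<subseteq> Phi"
  proof
    fix \<omega> assume "\<omega> \<in> set_pmf q"
    then have "\<omega> permutes {1..n}" "\<omega> \<in> E" using setq sup by auto
    then show "\<omega> \<in> Phi" unfolding E_def using Y_iff by blast
  qed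
  have PE: "measure p E > 0" using measure_pmf_posI[OF hz zE] .
  have H: "pmf p z > 0" using hz by (simp add: pmf_positive)
  define D where "D c = {\<sigma>\<in>Phi. \<forall>a\<in>{1..n}. cl a \<noteq> c \<longrightarrow> \<sigma> a = z a}" for c
  have zD: "z \<in> D c" for c unfolding D_def using z_Phi by auto
  have Dne: "set_pmf p \<inter> D c \<noteq> {}" for c using zD[of c] hz by blast
  have PD: "measure p (D c) > 0" for c using measure_pmf_posI[OF hz zD] .
  define vv where "vv c \<omega> = mixf (\<lambda>c'. if c' = c then \<omega> else z)" for c \<omega>
  have fam: "\<forall>c'\<in>{1..s} \<times> {1..t}. (if c' = c then \<omega> else z) \<in> Phi" if "\<omega> \<in> Phi" for c \<omega>
    using that z_Phi by auto
  have vvD: "vv c \<omega> \<in> D c" if "\<omega> \<in> Phi" for c \<omega>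
  proof -
    have "vv c \<omega> \<in> Phi" unfolding vv_def by (rule mix_Phi[OF fam[OF that]])
    moreover have "\<forall>a\<in>{1..n}. cl a \<noteq> c \<longrightarrow> vv c \<omega> a = z a"
      unfolding vv_def using mix_val by auto
    ultimately show ?thesis unfolding D_def by auto
  qed
  have vvX: "Xc c (vv c \<omega>) = Xc c \<omega>" if "\<omega> \<in> Phi" "c \<in> I" for c \<omega>
    unfolding vv_def using mix_X[OF fam[OF that(1)], of c] that(2) unfolding I_def by simp
  have Dinj: "\<sigma> = \<sigma>'" if "\<sigma> \<in> D c" "\<sigma>' \<in> D c" "c \<in> I" "Xc c \<sigma> = Xc c \<sigma>'" for \<sigma> \<sigma>' c
  proof -
    have P: "\<sigma> \<in> Phi" "\<sigma>' \<in> Phi" using that unfolding D_def by auto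
    show ?thesis
    proof (rule perm_eq_on[OF Phi_perm[OF P(1)] Phi_perm[OF P(2)]], intro ballI)
      fix a assume a: "a \<in> {1..n}"
      show "\<sigma> a = \<sigma>' a"
      proof (cases "cl a = c")
        case True
        have "(a, \<sigma> a) \<in> Xc c \<sigma>" using Xc_char[OF Phi_colOK[OF P(1)], of c] that(3) a True
          unfolding I_def by auto
        then have "(a, \<sigma> a) \<in> Xc c \<sigma>'" using that(4) by simp
        then show ?thesis using Xc_char[OF Phi_colOK[OF P(2)], of c] that(3) unfolding I_def by auto
      next
        case False
        then show ?thesis using that(1,2) a unfolding D_def by auto
      qed
    qed
  qed
  define m where "m c = map_pmf (Xc c) (cond_pmf p (D c))" for c
  have m1: "pmf (m c) (Xc c \<sigma>0) = pmf p \<sigma>0 / measure p (D c)" if "\<sigma>0 \<in> D c" "c \<in> I" for \<sigma>0 c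
  proof -
    let ?Q = "cond_pmf p (D c)"
    have sQ: "set_pmf ?Q = set_pmf p \<inter> D c" by (rule set_cond_pmf[OF Dne])
    have "(Xc c -` {Xc c \<sigma>0}) \<inter> set_pmf ?Q = {\<sigma>0} \<inter> set_pmf ?Q"
      using Dinj[OF _ that(1) that(2)] sQ by auto
    then have "measure ?Q (Xc c -` {Xc c \<sigma>0}) = pmf ?Q \<sigma>0"
      using measure_eq_on_supp measure_pmf_single by metis
    then show ?thesis unfolding m_def pmf_map using pmf_cond[OF Dne] that(1) by simp
  qed
  have m0: "pmf (m c) b = 0" if "b \<notin> Xc c ` D c" for b c
  proof -
    let ?Q = "cond_pmf p (D c)"
    have sQ: "set_pmf ?Q = set_pmf p \<inter> D c" by (rule set_cond_pmf[OF Dne])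
    have "(Xc c -` {b}) \<inter> set_pmf ?Q = {} \<inter> set_pmf ?Q" using sQ that by auto
    then have "measure ?Q (Xc c -` {b}) = 0" using measure_eq_on_supp by (metis measure_empty)
    then show ?thesis unfolding m_def pmf_map .
  qed
  define B where "B \<omega> = restrict (\<lambda>c. Xc c \<omega>) I" for \<omega>
  define r where "r = map_pmf B q"
  have r1: "pmf r (B \<omega>0) = pmf p \<omega>0 / measure p E" if "\<omega>0 \<in> Phi" for \<omega>0
  proof -
    have "(B -` {B \<omega>0}) \<inter> set_pmf q = {\<omega>0} \<inter> set_pmf q"
    proof (intro set_eqI iffI)
      fix \<omega> assume h: "\<omega> \<in> (B -` {B \<omega>0}) \<inter> set_pmf q"
      then have BB: "B \<omega> = B \<omega>0" by simp
      have "\<forall>c\<in>I. Xc c \<omega> = Xc c \<omega>0"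
      proof
        fix c assume c: "c \<in> I"
        have "B \<omega> c = B \<omega>0 c" using BB by simp
        then show "Xc c \<omega> = Xc c \<omega>0" using c by (simp add: B_def)
      qed
      then have "\<omega> = \<omega>0" using X_inj[of \<omega> \<omega>0] setqPhi h that unfolding I_def by auto
      then show "\<omega> \<in> {\<omega>0} \<inter> set_pmf q" using h by auto
    qed auto
    then have "measure q (B -` {B \<omega>0}) = pmf q \<omega>0"
      using measure_eq_on_supp measure_pmf_single by metis
    then show ?thesis unfolding r_def pmf_map q_def using pmf_cond[OF Ene] PhiE[OF that] by simp
  qed
  have r0: "pmf r g = 0" if "g \<notin> B ` Phi" for g
  proof -
    have "(B -` {g}) \<inter> set_pmf q = {} \<inter> set_pmf q" using setqPhi that by auto
    then have "measure q (B -` {g}) = 0" using measure_eq_on_supp by (metis measure_empty)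
    then show ?thesis unfolding r_def pmf_map .
  qed
  define r' where "r' = Pi_pmf I undefined m"
  have r'1: "pmf r' (B \<omega>0) = (\<Prod>c\<in>I. pmf p (vv c \<omega>0)) / (\<Prod>c\<in>I. measure p (D c))"
    if "\<omega>0 \<in> Phi" for \<omega>0
  proof -
    have "pmf r' (B \<omega>0) = (\<Prod>c\<in>I. pmf (m c) (B \<omega>0 c))"
      unfolding r'_def pmf_Pi[OF finI] by (simp add: B_def)
    also have "\<dots> = (\<Prod>c\<in>I. pmf p (vv c \<omega>0) / measure p (D c))"
    proof (intro prod.cong refl)
      fix c assume c: "c \<in> I"
      have "pmf (m c) (B \<omega>0 c) = pmf (m c) (Xc c (vv c \<omega>0))" using vvX[OF that c] c by (simp add: B_def)
      also have "\<dots> = pmf p (vv c \<omega>0) / measure p (D c)" by (rule m1[OF vvD[OF that] c])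
      finally show "pmf (m c) (B \<omega>0 c) = pmf p (vv c \<omega>0) / measure p (D c)" .
    qed
    also have "\<dots> = (\<Prod>c\<in>I. pmf p (vv c \<omega>0)) / (\<Prod>c\<in>I. measure p (D c))"
      by (rule prod_dividef)
    finally show ?thesis .
  qed
  have r'0: "pmf r' g = 0" if g: "g \<notin> B ` Phi" for g
  proof (rule ccontr)
    assume nz: "pmf r' g \<noteq> 0"
    then have ext: "\<forall>c. c \<notin> I \<longrightarrow> g c = undefined" and
      pz: "(\<Prod>c\<in>I. pmf (m c) (g c)) \<noteq> 0"
      unfolding r'_def pmf_Pi[OF finI] by (auto split: if_splits)
    have "\<forall>c\<in>I. \<exists>\<sigma>\<in>D c. Xc c \<sigma> = g c"
    proof
      fix c assume c: "c \<in> I"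
      have "pmf (m c) (g c) \<noteq> 0" using pz c finI by auto
      then show "\<exists>\<sigma>\<in>D c. Xc c \<sigma> = g c" using m0[of "g c" c] by auto
    qed
    then obtain \<sigma> where \<sigma>: "\<forall>c\<in>I. \<sigma> c \<in> D c \<and> Xc c (\<sigma> c) = g c" by metis
    have \<sigma>P: "\<forall>c\<in>{1..s} \<times> {1..t}. \<sigma> c \<in> Phi" using \<sigma> unfolding D_def I_def by auto
    have "B (mixf \<sigma>) = g"
    proof
      fix c show "B (mixf \<sigma>) c = g c"
      proof (cases "c \<in> I")
        case True
        then show ?thesis using mix_X[OF \<sigma>P, of c] \<sigma> unfolding B_def I_def by auto
      next
        case False
        then have "g c = undefined" using ext by blast
        then show ?thesis using False unfolding B_def by simp
      qed
    qed
    moreover have "mixf \<sigma> \<in> Phi" by (rule mix_Phi[OF \<sigma>P])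
    ultimately show False using g by auto
  qed
  define K where "K = pmf p z * (\<Prod>c\<in>I. measure p (D c)) / (pmf p z ^ (s * t) * measure p E)"
  have PDs: "(\<Prod>c\<in>I. measure p (D c)) > 0" using PD by (simp add: prod_pos)
  have Kpos: "K > 0" unfolding K_def using H PDs PE by simp
  have propeq: "pmf r g = K * pmf r' g" for g
  proof (cases "g \<in> B ` Phi")
    case True
    then obtain \<omega>0 where w0: "\<omega>0 \<in> Phi" "g = B \<omega>0" by auto
    have key: "pmf p \<omega>0 * pmf p z ^ (s * t) = pmf p z * (\<Prod>c\<in>I. pmf p (vv c \<omega>0))"
      using key_formula[OF Ld Ldi sup w0(1) H] unfolding vv_def I_def by simp
    have Hn: "pmf p z ^ (s * t) > 0" using H by simp
    have e: "pmf p \<omega>0 = pmf p z * (\<Prod>c\<in>I. pmf p (vv c \<omega>0)) / pmf p z ^ (s * t)"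
      using key Hn H by (simp add: eq_divide_eq)
    show ?thesis unfolding w0(2) r1[OF w0(1)] r'1[OF w0(1)] e K_def
      by (rule alg[OF Hn PE PDs])
  next
    case False
    then show ?thesis using r0 r'0 by simp
  qed
  have finr: "finite (set_pmf r)"
  proof -
    have "set_pmf q \<subseteq> {\<pi>. \<pi> permutes {1..n}}" using setq sup by auto
    then have "finite (set_pmf q)" using finite_permutations[of "{1..n}"] finite_subset by auto
    then show ?thesis unfolding r_def by simp
  qed
  have "r = r'" by (rule pmf_prop_eq[OF propeq finr Kpos])
  then have "map_pmf (\<lambda>\<omega>. restrict (\<lambda>c. Xc c \<omega>) I) q = Pi_pmf I undefined m"
    unfolding r_def r'_def B_def by simp
  from indep_vars_map_Pi[OF this finI] show ?thesis unfolding q_def E_def I_def .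
qed

end

lemma measure_cond:
  assumes "set_pmf p \<inter> E \<noteq> {}"
  shows "measure (cond_pmf p E) S = measure p (E \<inter> S) / measure p E"
  unfolding cond_pmf.rep_eq[OF assms]
  by (rule measure_uniform_measure)
     (simp_all add: emeasure_measure_pmf_not_zero[OF assms] measure_pmf.emeasure_finite)

lemma cprob_indep:
  assumes Ene: "set_pmf p \<inter> E \<noteq> {}"
    and ind: "measure (cond_pmf p E) (F1 \<inter> F2) = measure (cond_pmf p E) F1 * measure (cond_pmf p E) F2"
    and h1: "Pre \<inter> set_pmf p = F1 \<inter> E \<inter> set_pmf p"
    and h2: "A \<inter> E \<inter> set_pmf p = F2 \<inter> E \<inter> set_pmf p"
    and h3: "SE \<inter> set_pmf p = E \<inter> set_pmf p"
    and pos: "measure p Pre > 0"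
  shows "cprob p A Pre = cprob p A SE"
proof -
  obtain x where "x \<in> set_pmf p" "x \<in> E" using Ene by auto
  then have PE: "measure p E > 0" by (rule measure_pmf_posI)
  note mc = measure_cond[OF Ene]
  have m1: "measure p Pre = measure p (E \<inter> F1)"
    by (rule measure_eq_on_supp) (use h1 in blast)
  have m2: "measure p (A \<inter> Pre) = measure p (E \<inter> (F1 \<inter> F2))"
    by (rule measure_eq_on_supp) (use h1 h2 in blast)
  have m3: "measure p (A \<inter> SE) = measure p (E \<inter> F2)"
    by (rule measure_eq_on_supp) (use h2 h3 in blast)
  have m4: "measure p SE = measure p E"
    by (rule measure_eq_on_supp) (use h3 in blast)
  have QF1: "measure (cond_pmf p E) F1 > 0" using mc m1 pos PE by simp
  have "cprob p A Pre = measure (cond_pmf p E) (F1 \<inter> F2) / measure (cond_pmf p E) F1"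
    unfolding cprob_def m1 m2 mc using PE by simp
  also have "\<dots> = measure (cond_pmf p E) F2" using ind QF1 by simp
  also have "\<dots> = cprob p A SE" unfolding cprob_def m3 m4 mc by simp
  finally show ?thesis .
qed

lemma cprob_map: "cprob (map_pmf f p) A B = cprob p (f -` A) (f -` B)"
  unfolding cprob_def by (simp add: vimage_Int)

lemma compl_image:
  fixes \<tau> \<tau>' :: "nat \<Rightarrow> nat"
  assumes "\<tau> permutes {1..n}" "\<tau>' permutes {1..n}" "\<tau> ` {1..k} = \<tau>' ` {1..k}" "k \<le> n"
  shows "\<tau> ` {k+1..n} = \<tau>' ` {k+1..n}"
proof -
  have split: "{1..n} = {1..k} \<union> {k+1..n}" "{1..k} \<inter> {k+1..n} = {}" using assms(4) by auto
  have d: "{k+1..n} = {1..n} - {1..k}" using assms(4) by auto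
  have "\<tau> ` {k+1..n} = \<tau> ` {1..n} - \<tau> ` {1..k}"
    unfolding d by (rule image_set_diff[OF permutes_inj[OF assms(1)]])
  moreover have "\<tau>' ` {k+1..n} = \<tau>' ` {1..n} - \<tau>' ` {1..k}"
    unfolding d by (rule image_set_diff[OF permutes_inj[OF assms(2)]])
  ultimately show ?thesis using assms(3) permutes_image[OF assms(1)] permutes_image[OF assms(2)] by simp
qed

lemma gb_rows:
  assumes "\<sigma> permutes {1..n}" "K \<subseteq> {1..n}"
  shows "graph_block \<sigma> K {1..n} = {(a, \<sigma> a) | a. a \<in> K}"
  using assms permutes_in_image[OF assms(1)] unfolding graph_block_def by blast

lemma gb_cols:
  assumes "\<sigma> permutes {1..n}" "L \<subseteq> {1..n}"
  shows "graph_block \<sigma> {1..n} L = {(inv \<sigma> b, b) | b. b \<in> L}"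
proof -
  have "(a, \<sigma> a) \<in> {(inv \<sigma> b, b) | b. b \<in> L}" if "\<sigma> a \<in> L" for a
    using that permutes_inverses(2)[OF assms(1)] by (metis (mono_tags, lifting) mem_Collect_eq)
  moreover have "(inv \<sigma> b, b) \<in> graph_block \<sigma> {1..n} L" if "b \<in> L" for b
  proof -
    have "inv \<sigma> b \<in> {1..n}" using that assms permutes_in_image[OF permutes_inv[OF assms(1)]] by blast
    moreover have "\<sigma> (inv \<sigma> b) = b" using permutes_inverses(1)[OF assms(1)] by simp
    ultimately show ?thesis using that unfolding graph_block_def by force
  qed
  ultimately show ?thesis unfolding graph_block_def by blast
qed

lemma graph_eq_iff: "{(a, f a) | a. a \<in> K} = {(a, g a) | a. a \<in> K} \<longleftrightarrow> (\<forall>a\<in>K. f a = g a)"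
  by (auto simp: set_eq_iff)

lemma graph_eq_iff2: "{(f b, b) | b. b \<in> K} = {(g b, b) | b. b \<in> K} \<longleftrightarrow> (\<forall>b\<in>K. f b = g b)"
  by (auto simp: set_eq_iff)


definition RHSP :: "nat \<Rightarrow> (nat \<Rightarrow> nat) pmf \<Rightarrow> bool" where
  "RHSP n p \<longleftrightarrow> (\<forall>s t kappa lam. consecutive_partition n s kappa \<and> consecutive_partition n t lam \<longrightarrow>
       cond_indep_vars p
         (\<lambda>(i, j) \<pi>. graph_block \<pi> (block kappa i) (block lam j))
         ({1..s} \<times> {1..t})
         (\<lambda>\<pi>. (map (\<lambda>i. \<pi> ` block kappa i) [1..<s+1],
                map (\<lambda>j. inv \<pi> ` block lam j) [1..<t+1])))"

lemma upt3: "[1..<2+1] = [1::nat, 2]" by (simp add: upt_rec)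
lemma upt2: "[1..<1+1] = [1::nat]" by simp

lemma indep2:
  assumes ind: "prob_space.indep_vars (measure_pmf Q) (\<lambda>_. count_space UNIV) X I"
    and c: "c1 \<in> I" "c2 \<in> I" "c1 \<noteq> c2"
  shows "measure Q (X c1 -` S1 \<inter> X c2 -` S2) = measure Q (X c1 -` S1) * measure Q (X c2 -` S2)"
proof -
  define A where "A c = (if c = c1 then S1 else S2)" for c
  have "measure Q (\<Inter>i\<in>{c1, c2}. X i -` A i \<inter> space (measure_pmf Q))
      = (\<Prod>i\<in>{c1, c2}. measure Q (X i -` A i \<inter> space (measure_pmf Q)))"
    by (rule prob_space.indep_varsD[OF measure_pmf.prob_space_axioms ind]) (use c in auto)
  then show ?thesis using c(3) unfolding A_def by (simp add: Int_commute)
qed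

lemma Ld_from_RHS:
  assumes sup: "set_pmf p \<subseteq> {\<pi>. \<pi> permutes {1..n}}" and R: "RHSP n p"
  shows "L_decomposable n p"
  unfolding L_decomposable_def
proof (intro allI impI)
  fix k \<pi> assume H: "2 \<le> k \<and> k + 2 \<le> n \<and> \<pi> permutes {1..n} \<and>
        measure_pmf.prob p {\<sigma>. \<forall>i\<in>{1..k}. \<sigma> i = \<pi> i} > 0"
  then have kn: "2 \<le> k" "k + 2 \<le> n" and pi: "\<pi> permutes {1..n}"
    and pos: "measure_pmf.prob p {\<sigma>. \<forall>i\<in>{1..k}. \<sigma> i = \<pi> i} > 0" by auto
  define Pre where "Pre = {\<sigma>::nat\<Rightarrow>nat. \<forall>i\<in>{1..k}. \<sigma> i = \<pi> i}"
  define A where "A = {\<sigma>::nat\<Rightarrow>nat. \<sigma> (k+1) = \<pi> (k+1)}"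
  define SE where "SE = {\<sigma>::nat\<Rightarrow>nat. \<sigma> ` {1..k} = \<pi> ` {1..k}}"
  define kappa where "kappa = (\<lambda>i::nat. if i = 0 then 0 else if i = 1 then k else n)"
  define lam where "lam = (\<lambda>j::nat. if j = 0 then 0 else n)"
  have cpk: "consecutive_partition n 2 kappa" unfolding consecutive_partition_def kappa_def
    using kn by (auto simp: less_Suc_eq numeral_2_eq_2)
  have cpl: "consecutive_partition n 1 lam" unfolding consecutive_partition_def lam_def
    using kn by auto
  have b1: "block kappa 1 = {1..k}" and b2: "block kappa 2 = {k+1..n}" and bl: "block lam 1 = {1..n}"
    by (simp_all add: block_def kappa_def lam_def)
  have b1': "block kappa (Suc 0) = {1..k}" and bl': "block lam (Suc 0) = {1..n}" using b1 bl by simp_all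
  define X where "X = (\<lambda>(i, j) (\<pi>::nat\<Rightarrow>nat). graph_block \<pi> (block kappa i) (block lam j))"
  define Y where "Y = (\<lambda>\<pi>::nat\<Rightarrow>nat. (map (\<lambda>i. \<pi> ` block kappa i) [1..<2+1],
                map (\<lambda>j. inv \<pi> ` block lam j) [1..<1+1]))"
  have ci: "cond_indep_vars p X ({1..2} \<times> {1..1}) Y"
    using R cpk cpl unfolding RHSP_def X_def Y_def by blast
  define E where "E = {\<omega>. Y \<omega> = Y \<pi>}"
  have Yiff: "Y \<sigma> = Y \<pi> \<longleftrightarrow> \<sigma> ` {1..k} = \<pi> ` {1..k}" if s: "\<sigma> permutes {1..n}" for \<sigma>
  proof
    assume "Y \<sigma> = Y \<pi>" then show "\<sigma> ` {1..k} = \<pi> ` {1..k}" unfolding Y_def upt3 upt2 by (simp add: b1')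
  next
    assume e: "\<sigma> ` {1..k} = \<pi> ` {1..k}"
    have "\<sigma> ` {k+1..n} = \<pi> ` {k+1..n}" using compl_image[OF s pi e] kn by simp
    moreover have "inv \<sigma> ` {1..n} = inv \<pi> ` {1..n}"
      using permutes_image[OF permutes_inv[OF s]] permutes_image[OF permutes_inv[OF pi]] by simp
    ultimately show "Y \<sigma> = Y \<pi>" unfolding Y_def upt3 upt2 using e by (simp add: b1' b2 bl')
  qed
  have PreE: "Pre \<inter> set_pmf p \<subseteq> E"
  proof
    fix \<sigma> assume h: "\<sigma> \<in> Pre \<inter> set_pmf p"
    then have "\<sigma> permutes {1..n}" using sup by auto
    moreover have "\<sigma> ` {1..k} = \<pi> ` {1..k}" using h unfolding Pre_def by auto
    ultimately show "\<sigma> \<in> E" unfolding E_def using Yiff by blast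
  qed
  have Ene: "set_pmf p \<inter> E \<noteq> {}"
  proof
    assume "set_pmf p \<inter> E = {}"
    then have "Pre \<inter> set_pmf p = {} \<inter> set_pmf p" using PreE by auto
    then have "measure p Pre = 0" using measure_eq_on_supp by (metis measure_empty)
    then show False using pos unfolding Pre_def by simp
  qed
  have PE: "measure p E > 0"
  proof -
    obtain x where "x \<in> set_pmf p" "x \<in> E" using Ene by auto
    then show ?thesis by (rule measure_pmf_posI)
  qed
  have ind: "prob_space.indep_vars (measure_pmf (cond_pmf p E)) (\<lambda>_. count_space UNIV) X ({1..2} \<times> {1..1})"
    using ci PE unfolding cond_indep_vars_def E_def by blast
  define F1 where "F1 = X (1, 1) -` {X (1, 1) \<pi>}"
  define F2 where "F2 = X (2, 1) -` {gr. (k+1, \<pi> (k+1)) \<in> gr}"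
  have indF: "measure (cond_pmf p E) (F1 \<inter> F2) = measure (cond_pmf p E) F1 * measure (cond_pmf p E) F2"
    unfolding F1_def F2_def by (rule indep2[OF ind]) auto
  have X11: "X (1, 1) \<sigma> = {(a, \<sigma> a) | a. a \<in> {1..k}}" if "\<sigma> permutes {1..n}" for \<sigma>
    unfolding X_def using gb_rows[OF that, of "{1..k}"] kn by (simp add: b1' bl')
  have X21: "X (2, 1) \<sigma> = {(a, \<sigma> a) | a. a \<in> {k+1..n}}" if "\<sigma> permutes {1..n}" for \<sigma>
    unfolding X_def using gb_rows[OF that, of "{k+1..n}"] by (simp add: b2 bl')
  have h1: "Pre \<inter> set_pmf p = F1 \<inter> E \<inter> set_pmf p"
  proof (intro set_eqI iffI)
    fix \<sigma> assume h: "\<sigma> \<in> Pre \<inter> set_pmf p"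
    then have s: "\<sigma> permutes {1..n}" using sup by auto
    have "X (1, 1) \<sigma> = X (1, 1) \<pi>" unfolding X11[OF s] X11[OF pi] graph_eq_iff
      using h unfolding Pre_def by auto
    then show "\<sigma> \<in> F1 \<inter> E \<inter> set_pmf p" using h PreE unfolding F1_def by auto
  next
    fix \<sigma> assume h: "\<sigma> \<in> F1 \<inter> E \<inter> set_pmf p"
    then have s: "\<sigma> permutes {1..n}" using sup by auto
    have "X (1, 1) \<sigma> = X (1, 1) \<pi>" using h unfolding F1_def by auto
    then have "\<forall>a\<in>{1..k}. \<sigma> a = \<pi> a" unfolding X11[OF s] X11[OF pi] graph_eq_iff .
    then show "\<sigma> \<in> Pre \<inter> set_pmf p" using h unfolding Pre_def by auto
  qed
  have h2: "A \<inter> E \<inter> set_pmf p = F2 \<inter> E \<inter> set_pmf p"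
  proof -
    have "\<sigma> \<in> A \<longleftrightarrow> \<sigma> \<in> F2" if s: "\<sigma> permutes {1..n}" for \<sigma>
    proof -
      have "k + 1 \<in> {k+1..n}" using kn by auto
      then show ?thesis unfolding A_def F2_def using X21[OF s] by auto
    qed
    then show ?thesis using sup by blast
  qed
  have h3: "SE \<inter> set_pmf p = E \<inter> set_pmf p"
    unfolding SE_def E_def using Yiff sup by blast
  have "cprob p A Pre = cprob p A SE"
    by (rule cprob_indep[OF Ene indF h1 h2 h3]) (use pos in \<open>simp add: Pre_def\<close>)
  then show "cprob p {\<sigma>. \<sigma> (k + 1) = \<pi> (k + 1)} {\<sigma>. \<forall>i\<in>{1..k}. \<sigma> i = \<pi> i} =
       cprob p {\<sigma>. \<sigma> (k + 1) = \<pi> (k + 1)} {\<sigma>. \<sigma> ` {1..k} = \<pi> ` {1..k}}"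
    unfolding A_def Pre_def SE_def .
qed


lemma Ldi_from_RHS:
  assumes sup: "set_pmf p \<subseteq> {\<pi>. \<pi> permutes {1..n}}" and R: "RHSP n p"
  shows "L_decomposable n (map_pmf inv p)"
  unfolding L_decomposable_def cprob_map
proof (intro allI impI)
  fix k \<pi> assume H: "2 \<le> k \<and> k + 2 \<le> n \<and> \<pi> permutes {1..n} \<and>
        measure_pmf.prob (map_pmf inv p) {\<sigma>. \<forall>i\<in>{1..k}. \<sigma> i = \<pi> i} > 0"
  then have kn: "2 \<le> k" "k + 2 \<le> n" and pi: "\<pi> permutes {1..n}"
    and pos: "measure_pmf.prob p (inv -` {\<sigma>. \<forall>i\<in>{1..k}. \<sigma> i = \<pi> i}) > 0" by auto
  define \<pi>0 where "\<pi>0 = inv \<pi>"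
  have pi0: "\<pi>0 permutes {1..n}" unfolding \<pi>0_def by (rule permutes_inv[OF pi])
  have ipi0: "inv \<pi>0 = \<pi>" unfolding \<pi>0_def by (rule permutes_inv_inv[OF pi])
  define Pre where "Pre = inv -` {\<sigma>::nat\<Rightarrow>nat. \<forall>i\<in>{1..k}. \<sigma> i = \<pi> i}"
  define A where "A = inv -` {\<sigma>::nat\<Rightarrow>nat. \<sigma> (k+1) = \<pi> (k+1)}"
  define SE where "SE = inv -` {\<sigma>::nat\<Rightarrow>nat. \<sigma> ` {1..k} = \<pi> ` {1..k}}"
  define kappa where "kappa = (\<lambda>i::nat. if i = 0 then 0 else n)"
  define lam where "lam = (\<lambda>i::nat. if i = 0 then 0 else if i = 1 then k else n)"
  have cpl: "consecutive_partition n 2 lam" unfolding consecutive_partition_def lam_def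
    using kn by (auto simp: less_Suc_eq numeral_2_eq_2)
  have cpk: "consecutive_partition n 1 kappa" unfolding consecutive_partition_def kappa_def
    using kn by auto
  have b1: "block lam (Suc 0) = {1..k}" and b2: "block lam 2 = {k+1..n}" and bk: "block kappa (Suc 0) = {1..n}"
    by (simp_all add: block_def kappa_def lam_def)
  define X where "X = (\<lambda>(i, j) (\<pi>::nat\<Rightarrow>nat). graph_block \<pi> (block kappa i) (block lam j))"
  define Y where "Y = (\<lambda>\<pi>::nat\<Rightarrow>nat. (map (\<lambda>i. \<pi> ` block kappa i) [1..<1+1],
                map (\<lambda>j. inv \<pi> ` block lam j) [1..<2+1]))"
  have ci: "cond_indep_vars p X ({1..1} \<times> {1..2}) Y"
    using R cpk cpl unfolding RHSP_def X_def Y_def by blast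
  define E where "E = {\<omega>. Y \<omega> = Y \<pi>0}"
  have Yiff: "Y \<sigma> = Y \<pi>0 \<longleftrightarrow> inv \<sigma> ` {1..k} = \<pi> ` {1..k}" if s: "\<sigma> permutes {1..n}" for \<sigma>
  proof
    assume "Y \<sigma> = Y \<pi>0" then show "inv \<sigma> ` {1..k} = \<pi> ` {1..k}" unfolding Y_def upt3 upt2
      by (simp add: b1 ipi0)
  next
    assume e: "inv \<sigma> ` {1..k} = \<pi> ` {1..k}"
    have "inv \<sigma> ` {k+1..n} = inv \<pi>0 ` {k+1..n}" using compl_image[OF permutes_inv[OF s] permutes_inv[OF pi0]] e kn
      by (simp add: ipi0)
    moreover have "\<sigma> ` {1..n} = \<pi>0 ` {1..n}"
      using permutes_image[OF s] permutes_image[OF pi0] by simp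
    ultimately show "Y \<sigma> = Y \<pi>0" unfolding Y_def upt3 upt2 using e by (simp add: b1 b2 bk ipi0)
  qed
  have PreE: "Pre \<inter> set_pmf p \<subseteq> E"
  proof
    fix \<sigma> assume h: "\<sigma> \<in> Pre \<inter> set_pmf p"
    then have "\<sigma> permutes {1..n}" using sup by auto
    moreover have "inv \<sigma> ` {1..k} = \<pi> ` {1..k}" using h unfolding Pre_def by auto
    ultimately show "\<sigma> \<in> E" unfolding E_def using Yiff by blast
  qed
  have Ene: "set_pmf p \<inter> E \<noteq> {}"
  proof
    assume "set_pmf p \<inter> E = {}"
    then have "Pre \<inter> set_pmf p = {} \<inter> set_pmf p" using PreE by auto
    then have "measure p Pre = 0" using measure_eq_on_supp by (metis measure_empty)
    then show False using pos unfolding Pre_def by simp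
  qed
  have PE: "measure p E > 0"
  proof -
    obtain x where "x \<in> set_pmf p" "x \<in> E" using Ene by auto
    then show ?thesis by (rule measure_pmf_posI)
  qed
  have ind: "prob_space.indep_vars (measure_pmf (cond_pmf p E)) (\<lambda>_. count_space UNIV) X ({1..1} \<times> {1..2})"
    using ci PE unfolding cond_indep_vars_def E_def by blast
  define F1 where "F1 = X (1, 1) -` {X (1, 1) \<pi>0}"
  define F2 where "F2 = X (1, 2) -` {gr. (\<pi> (k+1), k+1) \<in> gr}"
  have indF: "measure (cond_pmf p E) (F1 \<inter> F2) = measure (cond_pmf p E) F1 * measure (cond_pmf p E) F2"
    unfolding F1_def F2_def by (rule indep2[OF ind]) auto
  have X11: "X (1, 1) \<sigma> = {(inv \<sigma> b, b) | b. b \<in> {1..k}}" if "\<sigma> permutes {1..n}" for \<sigma>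
    unfolding X_def using gb_cols[OF that, of "{1..k}"] kn by (simp add: b1 bk)
  have X12: "X (1, 2) \<sigma> = {(inv \<sigma> b, b) | b. b \<in> {k+1..n}}" if "\<sigma> permutes {1..n}" for \<sigma>
    unfolding X_def using gb_cols[OF that, of "{k+1..n}"] by (simp add: b2 bk)
  have h1: "Pre \<inter> set_pmf p = F1 \<inter> E \<inter> set_pmf p"
  proof (intro set_eqI iffI)
    fix \<sigma> assume h: "\<sigma> \<in> Pre \<inter> set_pmf p"
    then have s: "\<sigma> permutes {1..n}" using sup by auto
    have "X (1, 1) \<sigma> = X (1, 1) \<pi>0" unfolding X11[OF s] X11[OF pi0] graph_eq_iff2 ipi0
      using h unfolding Pre_def by auto
    then show "\<sigma> \<in> F1 \<inter> E \<inter> set_pmf p" using h PreE unfolding F1_def by auto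
  next
    fix \<sigma> assume h: "\<sigma> \<in> F1 \<inter> E \<inter> set_pmf p"
    then have s: "\<sigma> permutes {1..n}" using sup by auto
    have "X (1, 1) \<sigma> = X (1, 1) \<pi>0" using h unfolding F1_def by auto
    then have "\<forall>b\<in>{1..k}. inv \<sigma> b = \<pi> b" unfolding X11[OF s] X11[OF pi0] graph_eq_iff2 ipi0 .
    then show "\<sigma> \<in> Pre \<inter> set_pmf p" using h unfolding Pre_def by auto
  qed
  have h2: "A \<inter> E \<inter> set_pmf p = F2 \<inter> E \<inter> set_pmf p"
  proof -
    have "\<sigma> \<in> A \<longleftrightarrow> \<sigma> \<in> F2" if s: "\<sigma> permutes {1..n}" for \<sigma>
    proof -
      have "k + 1 \<in> {k+1..n}" using kn by auto
      then show ?thesis unfolding A_def F2_def using X12[OF s] by auto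
    qed
    then show ?thesis using sup by blast
  qed
  have h3: "SE \<inter> set_pmf p = E \<inter> set_pmf p"
    unfolding SE_def E_def using Yiff sup by blast
  have "cprob p A Pre = cprob p A SE"
    by (rule cprob_indep[OF Ene indF h1 h2 h3]) (use pos in \<open>simp add: Pre_def\<close>)
  then show "cprob p (inv -` {\<sigma>. \<sigma> (k + 1) = \<pi> (k + 1)}) (inv -` {\<sigma>. \<forall>i\<in>{1..k}. \<sigma> i = \<pi> i}) =
       cprob p (inv -` {\<sigma>. \<sigma> (k + 1) = \<pi> (k + 1)}) (inv -` {\<sigma>. \<sigma> ` {1..k} = \<pi> ` {1..k}})"
    unfolding A_def Pre_def SE_def .
qed

theorem proposition3:
  fixes n :: nat and p :: "(nat \<Rightarrow> nat) pmf"
  assumes "set_pmf p \<subseteq> {\<pi>. \<pi> permutes {1..n}}"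
  shows "bi_decomposable n p \<longleftrightarrow>
    (\<forall>s t kappa lam. consecutive_partition n s kappa \<and> consecutive_partition n t lam \<longrightarrow>
       cond_indep_vars p
         (\<lambda>(i, j) \<pi>. graph_block \<pi> (block kappa i) (block lam j))
         ({1..s} \<times> {1..t})
         (\<lambda>\<pi>. (map (\<lambda>i. \<pi> ` block kappa i) [1..<s+1],
                map (\<lambda>j. inv \<pi> ` block lam j) [1..<t+1])))"
  unfolding RHSP_def[symmetric]
proof
  assume "RHSP n p"
  then show "bi_decomposable n p" unfolding bi_decomposable_def
    using Ld_from_RHS[OF assms] Ldi_from_RHS[OF assms] by blast
next
  assume bi: "bi_decomposable n p"
  then have Ld: "L_decomposable n p" and Ldi: "L_decomposable n (map_pmf inv p)"
    unfolding bi_decomposable_def by auto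
  show "RHSP n p" unfolding RHSP_def
  proof (intro allI impI)
    fix s t kappa lam assume cp: "consecutive_partition n s kappa \<and> consecutive_partition n t lam"
    show "cond_indep_vars p (\<lambda>(i, j) \<pi>. graph_block \<pi> (block kappa i) (block lam j)) ({1..s} \<times> {1..t})
         (\<lambda>\<pi>. (map (\<lambda>i. \<pi> ` block kappa i) [1..<s+1], map (\<lambda>j. inv \<pi> ` block lam j) [1..<t+1]))"
      unfolding cond_indep_vars_def
    proof (intro allI impI)
      fix y
      assume pos: "measure p {\<omega>. (map (\<lambda>i. \<omega> ` block kappa i) [1..<s+1], map (\<lambda>j. inv \<omega> ` block lam j) [1..<t+1]) = y} > 0"
      obtain z where z: "z \<in> set_pmf p"
        "(map (\<lambda>i. z ` block kappa i) [1..<s+1], map (\<lambda>j. inv z ` block lam j) [1..<t+1]) = y"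
      proof -
        have "set_pmf p \<inter> {\<omega>. (map (\<lambda>i. \<omega> ` block kappa i) [1..<s+1], map (\<lambda>j. inv \<omega> ` block lam j) [1..<t+1]) = y} \<noteq> {}"
        proof
          assume e: "set_pmf p \<inter> {\<omega>. (map (\<lambda>i. \<omega> ` block kappa i) [1..<s+1], map (\<lambda>j. inv \<omega> ` block lam j) [1..<t+1]) = y} = {}"
          have "measure p {\<omega>. (map (\<lambda>i. \<omega> ` block kappa i) [1..<s+1], map (\<lambda>j. inv \<omega> ` block lam j) [1..<t+1]) = y} = 0"
            using measure_eq_on_supp[of _ p "{}"] e by (simp add: Int_commute)
          then show False using pos by simp
        qed
        then show ?thesis using that by blast
      qed
      have zp: "z permutes {1..n}" using z(1) assms by auto
      have cp1: "consecutive_partition n s kappa" and cp2: "consecutive_partition n t lam" using cp by auto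
      interpret F: fib n s t kappa lam z by (rule fib.intro[OF cp1 cp2 zp])
      have XX: "(\<lambda>(i, j) \<pi>. graph_block \<pi> (block kappa i) (block lam j)) = F.Xc"
      proof (intro ext)
        fix c \<pi> show "(case c of (i, j) \<Rightarrow> \<lambda>\<pi>. graph_block \<pi> (block kappa i) (block lam j)) \<pi> = F.Xc c \<pi>"
          by (cases c) (simp add: F.Xc_def)
      qed
      show "prob_space.indep_vars (measure_pmf (cond_pmf p {\<omega>. (map (\<lambda>i. \<omega> ` block kappa i) [1..<s+1], map (\<lambda>j. inv \<omega> ` block lam j) [1..<t+1]) = y}))
          (\<lambda>_. count_space UNIV) (\<lambda>(i, j) \<pi>. graph_block \<pi> (block kappa i) (block lam j)) ({1..s} \<times> {1..t})"
        unfolding XX z(2)[symmetric] by (rule F.indep_fiber[OF Ld Ldi assms z(1)])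
    qed
  qed
qed


end
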